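(* (1) For every Priestley space $X$, the lattices $\Phi(\mathcal{E}(X))$ and $\mathcal{E}(X\times \underline{2})$ are isomorphic as bounded lattices. (2) For every bounded distributive lattice $L$, the Priestley spaces $\mathcal{X}(\Phi(L))$ and $\mathcal{X}(L)\times\underline{2}$ are isomorphic in the category of Priestley spaces (i.e. there is an order-isomorphism that is a homeomorphism).
   Context: A Priestley space is a poset $(X,\le)$ with a compact topology such that whenever $x\not\ge y$ there is a clopen down-set $U$ with $x\in U$, $y\notin U$. $\mathcal{E}(X)$ is the bounded distributive lattice of clopen down-sets of $X$ ordered by inclusion. For a bounded distributive lattice $L$, $\mathcal{X}(L)$ is the set of prime ideals of $L$ ordered by inclusion, with topology generated by the sets $X_a=\{I: a\notin I\}$ and their complements, $a\in L$. $\underline{2}$ is the two-element chain $\{0<1\}$ with the discrete topology; products of Priestley spaces carry the product topology and coordinatewise order. For a lattice $L$, $\Phi(L)=\{(a,b)\in L\times L: a\le b\}$ with coordinatewise order, a $(0,1)$-sublattice of $L\times L$. Priestley duality: $L\cong\mathcal{E}(\mathcal{X}(L))$ and $X\cong\mathcal{X}(\mathcal{E}(X))$ naturally. *)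

theory Defs
  imports "HOL-Analysis.Analysis" "HOL-Library.Product_Order"
begin

definition partial_order_on_space :: "'a topology \<Rightarrow> ('a \<Rightarrow> 'a \<Rightarrow> bool) \<Rightarrow> bool" where
  "partial_order_on_space T le \<longleftrightarrow>
     (\<forall>x\<in>topspace T. le x x) \<and>
     (\<forall>x\<in>topspace T. \<forall>y\<in>topspace T. le x y \<and> le y x \<longrightarrow> x = y) \<and>
     (\<forall>x\<in>topspace T. \<forall>y\<in>topspace T. \<forall>z\<in>topspace T. le x y \<and> le y z \<longrightarrow> le x z)"

definition down_set :: "'a topology \<Rightarrow> ('a \<Rightarrow> 'a \<Rightarrow> bool) \<Rightarrow> 'a set \<Rightarrow> bool" where
  "down_set T le U \<longleftrightarrow> U \<subseteq> topspace T \<and> (\<forall>x\<in>U. \<forall>y\<in>topspace T. le y x \<longrightarrow> y \<in> U)"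

definition clopen_down_sets :: "'a topology \<Rightarrow> ('a \<Rightarrow> 'a \<Rightarrow> bool) \<Rightarrow> 'a set set" where
  "clopen_down_sets T le = {U. openin T U \<and> closedin T U \<and> down_set T le U}"

definition priestley_space :: "'a topology \<Rightarrow> ('a \<Rightarrow> 'a \<Rightarrow> bool) \<Rightarrow> bool" where
  "priestley_space T le \<longleftrightarrow> partial_order_on_space T le \<and> compact_space T \<and>
     (\<forall>x\<in>topspace T. \<forall>y\<in>topspace T. \<not> le y x \<longrightarrow>
        (\<exists>U\<in>clopen_down_sets T le. x \<in> U \<and> y \<notin> U))"

text \<open>The product X \<times> 2: product topology with the discrete two-point space
  (bool, False < True), coordinatewise order.\<close>

definition times2_top :: "'a topology \<Rightarrow> ('a \<times> bool) topology" where
  "times2_top T = prod_topology T (discrete_topology (UNIV :: bool set))"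

definition times2_le :: "('a \<Rightarrow> 'a \<Rightarrow> bool) \<Rightarrow> ('a \<times> bool) \<Rightarrow> ('a \<times> bool) \<Rightarrow> bool" where
  "times2_le le p q \<longleftrightarrow> le (fst p) (fst q) \<and> snd p \<le> snd q"

definition Phi :: "'b::order set \<Rightarrow> ('b \<times> 'b) set" where
  "Phi S = {(a, b). a \<in> S \<and> b \<in> S \<and> a \<le> b}"

definition bdd_lattice_iso_Phi_E ::
  "'a topology \<Rightarrow> ('a \<Rightarrow> 'a \<Rightarrow> bool) \<Rightarrow> ('a set \<times> 'a set \<Rightarrow> ('a \<times> bool) set) \<Rightarrow> bool" where
  "bdd_lattice_iso_Phi_E T le f \<longleftrightarrow>
     bij_betw f (Phi (clopen_down_sets T le)) (clopen_down_sets (times2_top T) (times2_le le)) \<and>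
     (\<forall>p\<in>Phi (clopen_down_sets T le). \<forall>q\<in>Phi (clopen_down_sets T le).
        f (fst p \<inter> fst q, snd p \<inter> snd q) = f p \<inter> f q \<and>
        f (fst p \<union> fst q, snd p \<union> snd q) = f p \<union> f q) \<and>
     f ({}, {}) = {} \<and>
     f (topspace T, topspace T) = topspace (times2_top T)"

text \<open>Ideals of a sublattice S of an ambient lattice type (operations inherited).\<close>

definition ideal_in :: "'b::lattice set \<Rightarrow> 'b set \<Rightarrow> bool" where
  "ideal_in S I \<longleftrightarrow> I \<subseteq> S \<and> I \<noteq> {} \<and>
     (\<forall>x\<in>I. \<forall>y\<in>S. y \<le> x \<longrightarrow> y \<in> I) \<and> (\<forall>x\<in>I. \<forall>y\<in>I. sup x y \<in> I)"

definition prime_ideal_in :: "'b::lattice set \<Rightarrow> 'b set \<Rightarrow> bool" where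
  "prime_ideal_in S I \<longleftrightarrow> ideal_in S I \<and> I \<noteq> S \<and>
     (\<forall>x\<in>S. \<forall>y\<in>S. inf x y \<in> I \<longrightarrow> x \<in> I \<or> y \<in> I)"

definition spec :: "'b::lattice set \<Rightarrow> 'b set set" where
  "spec S = {I. prime_ideal_in S I}"

definition spec_X :: "'b::lattice set \<Rightarrow> 'b \<Rightarrow> 'b set set" where
  "spec_X S a = {I \<in> spec S. a \<notin> I}"

definition spec_top :: "'b::lattice set \<Rightarrow> 'b set topology" where
  "spec_top S = topology_generated_by
      ((spec_X S ` S) \<union> ((\<lambda>a. spec S - spec_X S a) ` S))"

definition priestley_iso_spec_Phi ::
  "(('a::{bounded_lattice,distrib_lattice} \<times> 'a) set \<Rightarrow> 'a set \<times> bool) \<Rightarrow> bool" where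
  "priestley_iso_spec_Phi g \<longleftrightarrow>
     bij_betw g (spec (Phi (UNIV :: 'a set))) (spec (UNIV :: 'a set) \<times> (UNIV :: bool set)) \<and>
     (\<forall>I\<in>spec (Phi (UNIV :: 'a set)). \<forall>J\<in>spec (Phi (UNIV :: 'a set)).
        I \<subseteq> J \<longleftrightarrow> (fst (g I) \<subseteq> fst (g J) \<and> snd (g I) \<le> snd (g J))) \<and>
     homeomorphic_map (spec_top (Phi (UNIV :: 'a set)))
        (prod_topology (spec_top (UNIV :: 'a set)) (discrete_topology (UNIV :: bool set))) g"

end

theory Submission
  imports Defs
begin
lemma part1:
  assumes P: "priestley_space T le"
  shows "\<exists>f. bdd_lattice_iso_Phi_E T le f"
proof -
  let ?D = "discrete_topology (UNIV :: bool set)"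
  define f where "f = (\<lambda>(A::'a set, B). A \<times> {True} \<union> B \<times> {False})"
  have refl: "\<And>x. x \<in> topspace T \<Longrightarrow> le x x"
    using P unfolding priestley_space_def partial_order_on_space_def by blast
  have cT: "\<And>b. continuous_map T (times2_top T) (\<lambda>x. (x, b))"
    unfolding times2_top_def by (intro continuous_map_pairedI) auto
  have fin: "f p \<in> clopen_down_sets (times2_top T) (times2_le le)"
    if "p \<in> Phi (clopen_down_sets T le)" for p
  proof -
    obtain A B where p: "p = (A,B)" by (cases p)
    have A: "openin T A" "closedin T A" "down_set T le A"
      and B: "openin T B" "closedin T B" "down_set T le B" and AB: "A \<subseteq> B"
      using that unfolding p Phi_def clopen_down_sets_def by auto
    have "openin (times2_top T) (f p)"
      unfolding p f_def prod.case times2_top_def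
      by (intro openin_Un) (simp_all add: openin_prod_Times_iff A B)
    moreover have "closedin (times2_top T) (f p)"
      unfolding p f_def prod.case times2_top_def
      by (intro closedin_Un) (simp_all add: closedin_prod_Times_iff A B)
    moreover have "down_set (times2_top T) (times2_le le) (f p)"
      using A(3) B(3) AB unfolding p f_def down_set_def times2_top_def times2_le_def
      by auto
    ultimately show ?thesis unfolding clopen_down_sets_def by auto
  qed
  have finv: "\<exists>p \<in> Phi (clopen_down_sets T le). D = f p"
    if "D \<in> clopen_down_sets (times2_top T) (times2_le le)" for D
  proof -
    have D: "openin (times2_top T) D" "closedin (times2_top T) D"
      "down_set (times2_top T) (times2_le le) D"
      using that unfolding clopen_down_sets_def by auto
    define A where "A = {x \<in> topspace T. (x, True) \<in> D}"
    define B where "B = {x \<in> topspace T. (x, False) \<in> D}"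
    have sub: "D \<subseteq> topspace T \<times> UNIV"
      using D(3) unfolding down_set_def times2_top_def by auto
    have "openin T A" "closedin T A" "openin T B" "closedin T B"
      unfolding A_def B_def
      using openin_continuous_map_preimage[OF cT D(1)] closedin_continuous_map_preimage[OF cT D(2)]
      by auto
    moreover have "down_set T le A" "down_set T le B"
      using D(3) unfolding down_set_def A_def B_def times2_top_def times2_le_def by auto
    moreover have "A \<subseteq> B"
    proof
      fix x assume "x \<in> A"
      then have x: "x \<in> topspace T" "(x, True) \<in> D" unfolding A_def by auto
      then have "(x, False) \<in> D"
        using D(3) refl[OF x(1)] unfolding down_set_def times2_top_def times2_le_def by auto
      then show "x \<in> B" using x unfolding B_def by auto
    qed
    moreover have "D = f (A, B)"
    proof
      show "D \<subseteq> f (A, B)"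
      proof
        fix p assume "p \<in> D"
        then show "p \<in> f (A, B)" using sub unfolding f_def A_def B_def
          by (cases p; cases "snd p") auto
      qed
    qed (auto simp: f_def A_def B_def)
    ultimately show ?thesis unfolding Phi_def clopen_down_sets_def by auto
  qed
  have inj: "inj_on f (Phi (clopen_down_sets T le))"
  proof (rule inj_onI)
    fix p q assume "f p = f q"
    have e1: "fst r = {x. (x,True) \<in> f r}" "snd r = {x. (x,False) \<in> f r}" for r
      by (cases r; auto simp: f_def)+
    have "fst p = fst q" "snd p = snd q" using e1[of p] e1[of q] \<open>f p = f q\<close> by auto
    then show "p = q" by (simp add: prod_eq_iff)
  qed
  have "bij_betw f (Phi (clopen_down_sets T le)) (clopen_down_sets (times2_top T) (times2_le le))"
    unfolding bij_betw_def using inj fin finv by blast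
  moreover have "\<forall>p\<in>Phi (clopen_down_sets T le). \<forall>q\<in>Phi (clopen_down_sets T le).
        f (fst p \<inter> fst q, snd p \<inter> snd q) = f p \<inter> f q \<and>
        f (fst p \<union> fst q, snd p \<union> snd q) = f p \<union> f q"
    unfolding f_def by auto
  moreover have "f ({}, {}) = {}" unfolding f_def by auto
  moreover have "f (topspace T, topspace T) = topspace (times2_top T)"
    unfolding f_def times2_top_def by auto
  ultimately show ?thesis unfolding bdd_lattice_iso_Phi_E_def by blast
qed
lemma specPL:
  fixes I :: "('a::{bounded_lattice,distrib_lattice} \<times> 'a) set"
  assumes "I \<in> spec (Phi UNIV)"
  shows specPL_sub: "\<And>x y. (x,y) \<in> I \<Longrightarrow> x \<le> y"
    and specPL_down: "\<And>x y a b. (x,y) \<in> I \<Longrightarrow> a \<le> b \<Longrightarrow> a \<le> x \<Longrightarrow> b \<le> y \<Longrightarrow> (a,b) \<in> I"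
    and specPL_sup: "\<And>x y u v. (x,y) \<in> I \<Longrightarrow> (u,v) \<in> I \<Longrightarrow> (sup x u, sup y v) \<in> I"
    and specPL_prime: "\<And>a b c d. a \<le> b \<Longrightarrow> c \<le> d \<Longrightarrow> (inf a c, inf b d) \<in> I \<Longrightarrow> (a,b) \<in> I \<or> (c,d) \<in> I"
    and specPL_bot: "(bot,bot) \<in> I"
    and specPL_top: "(top,top) \<notin> I"
proof -
  have I: "I \<subseteq> Phi UNIV" "I \<noteq> {}" "\<forall>x\<in>I. \<forall>y\<in>Phi UNIV. y \<le> x \<longrightarrow> y \<in> I"
      "\<forall>x\<in>I. \<forall>y\<in>I. sup x y \<in> I" "I \<noteq> Phi UNIV"
      "\<forall>x\<in>Phi UNIV. \<forall>y\<in>Phi UNIV. inf x y \<in> I \<longrightarrow> x \<in> I \<or> y \<in> I"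
    using assms unfolding spec_def prime_ideal_in_def ideal_in_def by auto
  show sub: "\<And>x y. (x,y) \<in> I \<Longrightarrow> x \<le> y" using I(1) unfolding Phi_def by auto
  show down: "\<And>x y a b. (x,y) \<in> I \<Longrightarrow> a \<le> b \<Longrightarrow> a \<le> x \<Longrightarrow> b \<le> y \<Longrightarrow> (a,b) \<in> I"
    using I(3) unfolding Phi_def by fastforce
  show "\<And>x y u v. (x,y) \<in> I \<Longrightarrow> (u,v) \<in> I \<Longrightarrow> (sup x u, sup y v) \<in> I"
    using I(4) by fastforce
  show "\<And>a b c d. a \<le> b \<Longrightarrow> c \<le> d \<Longrightarrow> (inf a c, inf b d) \<in> I \<Longrightarrow> (a,b) \<in> I \<or> (c,d) \<in> I"
    using I(6) unfolding Phi_def by fastforce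
  obtain x y where "(x,y) \<in> I" using I(2) by auto
  then show "(bot,bot) \<in> I" using down by auto
  show "(top,top) \<notin> I"
  proof
    assume "(top,top) \<in> I"
    then have "Phi UNIV \<subseteq> I" using down unfolding Phi_def by auto
    then show False using I(1) I(5) by auto
  qed
qed

lemma specL:
  fixes P :: "'a::{bounded_lattice,distrib_lattice} set"
  assumes "P \<in> spec UNIV"
  shows specL_down: "\<And>x a. x \<in> P \<Longrightarrow> a \<le> x \<Longrightarrow> a \<in> P"
    and specL_sup: "\<And>x y. x \<in> P \<Longrightarrow> y \<in> P \<Longrightarrow> sup x y \<in> P"
    and specL_prime: "\<And>x y. inf x y \<in> P \<Longrightarrow> x \<in> P \<or> y \<in> P"
    and specL_bot: "bot \<in> P"
    and specL_top: "top \<notin> P"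
proof -
  have I: "P \<noteq> {}" "\<forall>x\<in>P. \<forall>y. y \<le> x \<longrightarrow> y \<in> P"
      "\<forall>x\<in>P. \<forall>y\<in>P. sup x y \<in> P" "P \<noteq> UNIV"
      "\<forall>x y. inf x y \<in> P \<longrightarrow> x \<in> P \<or> y \<in> P"
    using assms unfolding spec_def prime_ideal_in_def ideal_in_def by auto
  show down: "\<And>x a. x \<in> P \<Longrightarrow> a \<le> x \<Longrightarrow> a \<in> P" using I(2) by blast
  show "\<And>x y. x \<in> P \<Longrightarrow> y \<in> P \<Longrightarrow> sup x y \<in> P" using I(3) by blast
  show "\<And>x y. inf x y \<in> P \<Longrightarrow> x \<in> P \<or> y \<in> P" using I(5) by blast
  show "bot \<in> P" using I(1) down by fastforce
  show "top \<notin> P"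
  proof
    assume "top \<in> P" then have "UNIV \<subseteq> P" using down top_greatest by blast
    then show False using I(4) by auto
  qed
qed

lemma memI:
  fixes I :: "('a::{bounded_lattice,distrib_lattice} \<times> 'a) set"
  assumes I: "I \<in> spec (Phi UNIV)" and ab: "a \<le> b"
  shows "(a,b) \<in> I \<longleftrightarrow> (if (bot,top) \<in> I then (a,a) \<in> I else (b,b) \<in> I)"
proof (cases "(bot,top) \<in> I")
  case True
  have "(a,a) \<in> I \<Longrightarrow> (a,b) \<in> I"
  proof -
    assume "(a,a) \<in> I"
    then have "(sup a bot, sup a top) \<in> I" using specPL_sup[OF I _ True] by blast
    then show ?thesis using specPL_down[OF I] ab by fastforce
  qed
  moreover have "(a,b) \<in> I \<Longrightarrow> (a,a) \<in> I" using specPL_down[OF I] ab by blast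
  ultimately show ?thesis using True by auto
next
  case False
  have "(a,b) \<in> I \<Longrightarrow> (b,b) \<in> I"
  proof -
    assume "(a,b) \<in> I"
    then have "(inf b bot, inf b top) \<in> I" using specPL_down[OF I] ab by fastforce
    then show ?thesis using specPL_prime[OF I, of b b bot top] False by auto
  qed
  moreover have "(b,b) \<in> I \<Longrightarrow> (a,b) \<in> I" using specPL_down[OF I] ab by blast
  ultimately show ?thesis using False by auto
qed

definition gmap :: "('a::{bounded_lattice,distrib_lattice} \<times> 'a) set \<Rightarrow> 'a set \<times> bool" where
  "gmap I = ({a. (a,a) \<in> I}, (bot,top) \<in> I)"

definition hmap :: "'a::{bounded_lattice,distrib_lattice} set \<times> bool \<Rightarrow> ('a \<times> 'a) set" where
  "hmap p = {c \<in> Phi UNIV. (if snd p then fst c else snd c) \<in> fst p}"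

lemma g_in:
  fixes I :: "('a::{bounded_lattice,distrib_lattice} \<times> 'a) set"
  assumes I: "I \<in> spec (Phi UNIV)"
  shows "fst (gmap I) \<in> spec UNIV"
proof -
  have "prime_ideal_in UNIV {a. (a,a) \<in> I}"
    unfolding prime_ideal_in_def ideal_in_def
  proof (intro conjI ballI allI impI)
    show "{a. (a, a) \<in> I} \<noteq> {}" using specPL_bot[OF I] by auto
    show "{a. (a, a) \<in> I} \<noteq> UNIV" using specPL_top[OF I] by auto
    fix x y assume "x \<in> {a. (a, a) \<in> I}" "y \<le> x"
    then show "y \<in> {a. (a, a) \<in> I}" using specPL_down[OF I] by auto
  next
    fix x y assume "x \<in> {a. (a, a) \<in> I}" "y \<in> {a. (a, a) \<in> I}"
    then show "sup x y \<in> {a. (a, a) \<in> I}" using specPL_sup[OF I] by auto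
  next
    fix x y assume "inf x y \<in> {a. (a, a) \<in> I}"
    then show "x \<in> {a. (a, a) \<in> I} \<or> y \<in> {a. (a, a) \<in> I}"
      using specPL_prime[OF I, of x x y y] by auto
  qed auto
  then show ?thesis unfolding gmap_def spec_def by auto
qed

lemma h_in:
  fixes P :: "'a::{bounded_lattice,distrib_lattice} set"
  assumes P: "P \<in> spec UNIV"
  shows "hmap (P, i) \<in> spec (Phi UNIV)"
proof -
  have "prime_ideal_in (Phi UNIV) (hmap (P,i))"
    unfolding prime_ideal_in_def ideal_in_def
  proof (intro conjI ballI allI impI)
    show "hmap (P, i) \<subseteq> Phi UNIV" unfolding hmap_def by auto
    show "hmap (P, i) \<noteq> {}" using specL_bot[OF P] unfolding hmap_def Phi_def
      by (auto intro!: exI[of _ "(bot,bot)"])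
    show "hmap (P, i) \<noteq> Phi UNIV" using specL_top[OF P] unfolding hmap_def Phi_def
      by (auto simp: set_eq_iff intro!: exI[of _ "(top,top)"])
    fix x y assume "x \<in> hmap (P, i)" "y \<in> Phi UNIV" "y \<le> x"
    then show "y \<in> hmap (P, i)" using specL_down[OF P] unfolding hmap_def
      by (auto split: if_splits dest: fst_mono snd_mono)
  next
    fix x y assume "x \<in> hmap (P, i)" "y \<in> hmap (P, i)"
    then show "sup x y \<in> hmap (P, i)" using specL_sup[OF P] unfolding hmap_def Phi_def
      by (auto split: if_splits simp: le_supI1 le_supI2 sup_mono)
  next
    fix x y assume "x \<in> Phi UNIV" "y \<in> Phi UNIV" "inf x y \<in> hmap (P, i)"
    then show "x \<in> hmap (P, i) \<or> y \<in> hmap (P, i)" using specL_prime[OF P] unfolding hmap_def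
      by (auto split: if_splits)
  qed
  then show ?thesis unfolding spec_def by auto
qed

lemma gh:
  fixes P :: "'a::{bounded_lattice,distrib_lattice} set"
  assumes P: "P \<in> spec UNIV"
  shows "gmap (hmap (P, i)) = (P, i)"
  using specL_bot[OF P] specL_top[OF P] unfolding gmap_def hmap_def Phi_def by auto

lemma hg:
  fixes I :: "('a::{bounded_lattice,distrib_lattice} \<times> 'a) set"
  assumes I: "I \<in> spec (Phi UNIV)"
  shows "hmap (gmap I) = I"
proof (rule set_eqI)
  fix c :: "'a \<times> 'a"
  obtain a b where c: "c = (a,b)" by (cases c)
  show "c \<in> hmap (gmap I) \<longleftrightarrow> c \<in> I"
  proof (cases "a \<le> b")
    case True
    then show ?thesis using memI[OF I True] unfolding c hmap_def gmap_def Phi_def by auto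
  next
    case False
    then show ?thesis using specPL_sub[OF I] unfolding c hmap_def gmap_def Phi_def by auto
  qed
qed

lemma hmap_mem: "a \<le> b \<Longrightarrow> (a,b) \<in> hmap (P,i) \<longleftrightarrow> (if i then a else b) \<in> P"
  by (simp add: hmap_def Phi_def)

lemma topspace_spec_top:
  fixes S :: "'b::lattice set"
  assumes "S \<noteq> {}"
  shows "topspace (spec_top S) = spec S"
proof -
  obtain a where a: "a \<in> S" using assms by auto
  have "spec S \<subseteq> spec_X S a \<union> (spec S - spec_X S a)" by auto
  moreover have "spec_X S a \<union> (spec S - spec_X S a) \<subseteq> \<Union>((spec_X S ` S) \<union> ((\<lambda>a. spec S - spec_X S a) ` S))"
    using a by blast
  moreover have "\<Union>((spec_X S ` S) \<union> ((\<lambda>a. spec S - spec_X S a) ` S)) \<subseteq> spec S"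
    unfolding spec_X_def by auto
  ultimately show ?thesis unfolding spec_top_def topology_generated_by_topspace by blast
qed

lemma open_specX: "a \<in> S \<Longrightarrow> openin (spec_top S) (spec_X S a)"
  unfolding spec_top_def by (rule topology_generated_by_Basis) auto

lemma open_specXc: "a \<in> S \<Longrightarrow> openin (spec_top S) (spec S - spec_X S a)"
  unfolding spec_top_def by (rule topology_generated_by_Basis) auto

lemma part2:
  "\<exists>g :: ('a::{bounded_lattice,distrib_lattice} \<times> 'a) set \<Rightarrow> 'a set \<times> bool.
              priestley_iso_spec_Phi g"
proof (intro exI)
  let ?PL = "Phi (UNIV :: 'a set)"
  let ?X = "spec_top ?PL"
  let ?Y = "prod_topology (spec_top (UNIV :: 'a set)) (discrete_topology (UNIV :: bool set))"
  have PLne: "?PL \<noteq> {}" unfolding Phi_def by auto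
  have tX: "topspace ?X = spec ?PL" by (rule topspace_spec_top[OF PLne])
  have tY: "topspace ?Y = spec UNIV \<times> UNIV" by (simp add: topspace_spec_top)
  have gin: "gmap I \<in> spec UNIV \<times> UNIV" if "I \<in> spec ?PL" for I
    using g_in[OF that] by (cases "gmap I") auto
  have hin: "hmap p \<in> spec ?PL" if "p \<in> spec UNIV \<times> UNIV" for p
    using h_in[of "fst p" "snd p"] that by (cases p) auto
  have ghp: "gmap (hmap p) = p" if "p \<in> spec UNIV \<times> UNIV" for p :: "'a set \<times> bool"
    using gh[of "fst p" "snd p"] that by (cases p) auto
  have bij: "bij_betw gmap (spec ?PL) (spec UNIV \<times> UNIV)"
  proof (rule bij_betwI[where g = hmap])
    show "gmap \<in> spec ?PL \<rightarrow> spec UNIV \<times> UNIV" using gin by blast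
    show "hmap \<in> spec UNIV \<times> UNIV \<rightarrow> spec ?PL" using hin by blast
    show "\<And>x. x \<in> spec ?PL \<Longrightarrow> hmap (gmap x) = x" by (rule hg)
    show "\<And>y. y \<in> spec (UNIV :: 'a set) \<times> UNIV \<Longrightarrow> gmap (hmap y) = y" using ghp by blast
  qed
  have ord: "I \<subseteq> J \<longleftrightarrow> (fst (gmap I) \<subseteq> fst (gmap J) \<and> snd (gmap I) \<le> snd (gmap J))"
    if I: "I \<in> spec ?PL" and J: "J \<in> spec ?PL" for I J
  proof
    assume "I \<subseteq> J" then show "fst (gmap I) \<subseteq> fst (gmap J) \<and> snd (gmap I) \<le> snd (gmap J)"
      unfolding gmap_def by auto
  next
    assume a: "fst (gmap I) \<subseteq> fst (gmap J) \<and> snd (gmap I) \<le> snd (gmap J)"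
    show "I \<subseteq> J"
    proof
      fix c assume c: "c \<in> I"
      obtain x y where xy: "c = (x,y)" by (cases c)
      have le: "x \<le> y" using specPL_sub[OF I] c xy by auto
      show "c \<in> J"
      proof (cases "(bot,top) \<in> I")
        case True
        then have "(bot,top) \<in> J" using a unfolding gmap_def by auto
        moreover have "(x,x) \<in> J" using memI[OF I le] c xy True a unfolding gmap_def by auto
        ultimately show ?thesis using memI[OF J le] xy by auto
      next
        case False
        then have "(y,y) \<in> J" using memI[OF I le] c xy a unfolding gmap_def by auto
        then show ?thesis using specPL_down[OF J, of y y x y] le xy by auto
      qed
    qed
  qed
  have c1: "continuous_map ?X (spec_top (UNIV :: 'a set)) (\<lambda>I. fst (gmap I))"
    unfolding spec_top_def[of "UNIV :: 'a set"]
  proof (rule continuous_on_generated_topo)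
    fix U assume "U \<in> spec_X UNIV ` UNIV \<union> (\<lambda>a. spec UNIV - spec_X UNIV a) ` (UNIV :: 'a set)"
    then obtain a where "U = spec_X UNIV a \<or> U = spec UNIV - spec_X UNIV a" by auto
    then show "openin ?X ((\<lambda>I. fst (gmap I)) -` U \<inter> topspace ?X)"
    proof
      assume U: "U = spec_X UNIV a"
      have "(\<lambda>I. fst (gmap I)) -` U \<inter> topspace ?X = spec_X ?PL (a,a)"
        unfolding tX U spec_X_def using g_in by (auto simp: gmap_def)
      then show ?thesis using open_specX[of "(a,a)" ?PL] by (simp add: Phi_def)
    next
      assume U: "U = spec UNIV - spec_X UNIV a"
      have "(\<lambda>I. fst (gmap I)) -` U \<inter> topspace ?X = spec ?PL - spec_X ?PL (a,a)"
        unfolding tX U spec_X_def using g_in by (auto simp: gmap_def)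
      then show ?thesis using open_specXc[of "(a,a)" ?PL] by (simp add: Phi_def)
    qed
  next
    show "(\<lambda>I. fst (gmap I)) ` topspace ?X \<subseteq> \<Union> (spec_X UNIV ` UNIV \<union> (\<lambda>a. spec UNIV - spec_X UNIV a) ` (UNIV :: 'a set))"
      using topspace_spec_top[of "UNIV :: 'a set"] g_in tX unfolding spec_top_def by auto
  qed
  have c2: "continuous_map ?X (discrete_topology (UNIV :: bool set)) (\<lambda>I. snd (gmap I))"
    unfolding continuous_map_def
  proof (intro conjI allI impI)
    show "(\<lambda>I. snd (gmap I)) \<in> topspace ?X \<rightarrow> topspace (discrete_topology UNIV)" by auto
    fix U :: "bool set"
    have e: "{x \<in> topspace ?X. snd (gmap x) \<in> U} =
       (if True \<in> U then spec ?PL - spec_X ?PL (bot,top) else {}) \<union>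
       (if False \<in> U then spec_X ?PL (bot,top) else {})"
      unfolding tX spec_X_def gmap_def by (cases "True \<in> U"; cases "False \<in> U") (auto, (metis (full_types))+)
    have bt: "(bot,top) \<in> ?PL" unfolding Phi_def by auto
    show "openin ?X {x \<in> topspace ?X. snd (gmap x) \<in> U}"
      unfolding e by (intro openin_Un) (auto intro: open_specX[OF bt] open_specXc[OF bt])
  qed
  have cg: "continuous_map ?X ?Y gmap"
    using continuous_map_pairedI[OF c1 c2] by simp
  have ch: "continuous_map ?Y ?X hmap"
    unfolding spec_top_def[of ?PL]
  proof (rule continuous_on_generated_topo)
    fix U assume "U \<in> spec_X ?PL ` ?PL \<union> (\<lambda>a. spec ?PL - spec_X ?PL a) ` ?PL"
    then obtain a b where ab: "a \<le> b" and "U = spec_X ?PL (a,b) \<or> U = spec ?PL - spec_X ?PL (a,b)"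
      unfolding Phi_def by auto
    then show "openin ?Y (hmap -` U \<inter> topspace ?Y)"
    proof (elim disjE)
      assume U: "U = spec_X ?PL (a,b)"
      have "hmap -` U \<inter> topspace ?Y = spec_X UNIV b \<times> {False} \<union> spec_X UNIV a \<times> {True}"
        unfolding tY U spec_X_def using ab by (auto simp: hmap_mem h_in split: if_splits)
      then show ?thesis
        by (simp add: openin_Un openin_prod_Times_iff open_specX)
    next
      assume U: "U = spec ?PL - spec_X ?PL (a,b)"
      have "hmap -` U \<inter> topspace ?Y = (spec UNIV - spec_X UNIV b) \<times> {False} \<union> (spec UNIV - spec_X UNIV a) \<times> {True}"
        unfolding tY U spec_X_def using ab by (auto simp: hmap_mem h_in split: if_splits)
      then show ?thesis
        by (simp add: openin_Un openin_prod_Times_iff open_specXc)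
    qed
  next
    show "hmap ` topspace ?Y \<subseteq> \<Union> (spec_X ?PL ` ?PL \<union> (\<lambda>a. spec ?PL - spec_X ?PL a) ` ?PL)"
      using tX hin tY unfolding spec_top_def by auto
  qed
  have "homeomorphic_map ?X ?Y gmap"
  proof -
    have "homeomorphic_maps ?X ?Y gmap hmap"
      unfolding homeomorphic_maps_def
    proof (intro conjI ballI)
      show "continuous_map ?X ?Y gmap" by (rule cg)
      show "continuous_map ?Y ?X hmap" by (rule ch)
      fix x assume "x \<in> topspace ?X" then show "hmap (gmap x) = x" using tX hg by simp
    next
      fix y assume "y \<in> topspace ?Y" then show "gmap (hmap y) = y" using tY ghp by simp
    qed
    then show ?thesis by (rule homeomorphic_maps_imp_map)
  qed
  then show "priestley_iso_spec_Phi (gmap :: ('a \<times> 'a) set \<Rightarrow> 'a set \<times> bool)"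
    unfolding priestley_iso_spec_Phi_def using bij ord by blast
qed

theorem lemma4:
  fixes T :: "'x topology" and le :: "'x \<Rightarrow> 'x \<Rightarrow> bool"
  shows "(priestley_space T le \<longrightarrow> (\<exists>f. bdd_lattice_iso_Phi_E T le f))
         \<and> (\<exists>g :: ('a::{bounded_lattice,distrib_lattice} \<times> 'a) set \<Rightarrow> 'a set \<times> bool.
              priestley_iso_spec_Phi g)"
  using part1[of T le] part2 by blast

end
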